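(* Let $\alpha,\beta\in[0,r]\cap A$ with $\alpha<\beta$, and $I=(\alpha,\beta)$. Let $x\in\mathbf F_I$ with $\mathrm{fix}(x)\cap I\cap A=\varnothing$, and let $C$ be the centralizer of $x$ in $\mathbf F_I$. Let $\phi\colon\mathbf F_I\to\Lambda$ be $y\mapsto(\alpha)y'^{+}$. Then $\phi$ is a group homomorphism and its restriction to $C$ is injective. The same holds for $\phi\colon\mathbf F_I\to\Lambda$, $y\mapsto(\beta)y'^{-}$.
   Context: Maps act on the right. Fix real $r>0$, a subgroup $\Lambda\neq\{1\}$ of $\mathbb R^*_+$, and an additive subgroup $A\subseteq\mathbb R$ with $r\in A$ and $\lambda A\subseteq A$ for $\lambda\in\Lambda$. $\mathbf F=\mathbf F(r,\Lambda,A)$ is the group of homeomorphisms $x\colon[0,r)\to[0,r)$ that are piecewise affine with finitely many breakpoints, all slopes in $\Lambda$, and all breakpoints and their images in $A$; each extends uniquely to a homeomorphism of $[0,r]$. For a permutation $x$, $\mathrm{fix}(x)$ is its fixed point set and $\mathrm{supp}(x)$ its complement. For $S\subseteq[0,r)$, $\mathbf F_S=\{x\in\mathbf F\mid\mathrm{supp}(x)\subseteq S\}$. For a map $g$ affine on an open interval $(\gamma,\delta)$, $(\gamma)g'^{+}$ and $(\delta)g'^{-}$ denote the slope of $g$ there (at $r$ one uses the extension to $[0,r]$). *)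

theory Defs
  imports "HOL-Analysis.Analysis"
begin

text \<open>Elements of F(r,Lambda,A) are represented as functions real => real that are
  the identity outside [0,r).  Maps act on the right: the product x y (first x, then y)
  is the function composition y o x.\<close>

definition PL_F :: "real \<Rightarrow> real set \<Rightarrow> real set \<Rightarrow> (real \<Rightarrow> real) set" where
  "PL_F r \<Lambda> A = {f.
     (\<forall>t. t \<notin> {0..<r} \<longrightarrow> f t = t) \<and>
     (\<exists>g. homeomorphism {0..<r} {0..<r} f g) \<and>
     (\<exists>ps :: real list. ps \<noteq> [] \<and> sorted_wrt (<) ps \<and> hd ps = 0 \<and> last ps = r \<and>
        set ps \<subseteq> A \<and> f ` set ps \<subseteq> A \<and>
        (\<forall>i < length ps - 1. \<exists>l\<in>\<Lambda>. \<exists>c. \<forall>t\<in>{ps!i..<ps!(i+1)}. f t = l * t + c))}"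

definition supp :: "(real \<Rightarrow> real) \<Rightarrow> real set" where
  "supp f = {t. f t \<noteq> t}"

definition fixset :: "(real \<Rightarrow> real) \<Rightarrow> real set" where
  "fixset f = {t. f t = t}"

definition PL_F_on :: "real \<Rightarrow> real set \<Rightarrow> real set \<Rightarrow> real set \<Rightarrow> (real \<Rightarrow> real) set" where
  "PL_F_on r \<Lambda> A S = {f \<in> PL_F r \<Lambda> A. supp f \<inter> {0..<r} \<subseteq> S}"

definition rslope :: "(real \<Rightarrow> real) \<Rightarrow> real \<Rightarrow> real" where
  "rslope g a = (THE D. (g has_real_derivative D) (at a within {a<..}))"

definition lslope :: "(real \<Rightarrow> real) \<Rightarrow> real \<Rightarrow> real" where
  "lslope g b = (THE D. (g has_real_derivative D) (at b within {..<b}))"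

end

theory Submission
  imports Defs
begin



lemma rslope_affine:
  fixes f :: "real \<Rightarrow> real"
  assumes "t < b" "\<forall>s\<in>{t..<b}. f s = l * s + c"
  shows "rslope f t = l"
proof -
  have ev: "eventually (\<lambda>s. f s = l * s + c) (at t within {t<..})"
    using eventually_at_right_real[OF assms(1)] assms(2)
    by (auto elim: eventually_mono)
  have "((\<lambda>s. l * s + c) has_real_derivative l) (at t within {t<..})"
    by (auto intro!: derivative_eq_intros)
  hence d: "(f has_real_derivative l) (at t within {t<..})"
    using has_field_derivative_cong_eventually[OF ev] assms by auto
  show ?thesis unfolding rslope_def
  proof (rule the_equality)
    show "(f has_real_derivative l) (at t within {t<..})" by (rule d)
    fix D assume "(f has_real_derivative D) (at t within {t<..})"
    thus "D = l" using d has_field_derivative_unique trivial_limit_at_right_real by blast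
  qed
qed

lemma lslope_affine:
  fixes f :: "real \<Rightarrow> real"
  assumes "a < t" "\<forall>s\<in>{a..t}. f s = l * s + c"
  shows "lslope f t = l"
proof -
  have ev: "eventually (\<lambda>s. f s = l * s + c) (at t within {..<t})"
    using eventually_at_left_real[OF assms(1)] assms(2)
    by (auto elim: eventually_mono)
  have "((\<lambda>s. l * s + c) has_real_derivative l) (at t within {..<t})"
    by (auto intro!: derivative_eq_intros)
  hence d: "(f has_real_derivative l) (at t within {..<t})"
    using has_field_derivative_cong_eventually[OF ev] assms by auto
  show ?thesis unfolding lslope_def
  proof (rule the_equality)
    show "(f has_real_derivative l) (at t within {..<t})" by (rule d)
    fix D assume "(f has_real_derivative D) (at t within {..<t})"
    thus "D = l" using d has_field_derivative_unique trivial_limit_at_left_real by blast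
  qed
qed


lemma sorted_piece_right:
  fixes ps :: "real list"
  assumes "sorted_wrt (<) ps" "ps \<noteq> []" "hd ps \<le> t" "t < last ps"
  shows "\<exists>i < length ps - 1. ps!i \<le> t \<and> t < ps!(Suc i)"
  using assms
proof (induction ps)
  case Nil then show ?case by simp
next
  case (Cons x xs)
  show ?case
  proof (cases "xs = []")
    case True then show ?thesis using Cons by simp
  next
    case False
    show ?thesis
    proof (cases "t < hd xs")
      case True
      then show ?thesis using Cons False by (auto simp: hd_conv_nth intro!: exI[of _ 0])
    next
      case nt: False
      have "\<exists>i < length xs - 1. xs!i \<le> t \<and> t < xs!(Suc i)"
        using Cons.IH Cons.prems False nt by auto
      then obtain i where "i < length xs - 1" "xs!i \<le> t" "t < xs!(Suc i)" by blast
      then show ?thesis by (auto intro!: exI[of _ "Suc i"])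
    qed
  qed
qed

lemma sorted_piece_left:
  fixes ps :: "real list"
  assumes "sorted_wrt (<) ps" "ps \<noteq> []" "hd ps < t" "t \<le> last ps"
  shows "\<exists>i < length ps - 1. ps!i < t \<and> t \<le> ps!(Suc i)"
  using assms
proof (induction ps)
  case Nil then show ?case by simp
next
  case (Cons x xs)
  show ?case
  proof (cases "xs = []")
    case True then show ?thesis using Cons by simp
  next
    case False
    show ?thesis
    proof (cases "t \<le> hd xs")
      case True
      then show ?thesis using Cons False by (auto simp: hd_conv_nth intro!: exI[of _ 0])
    next
      case nt: False
      have "\<exists>i < length xs - 1. xs!i < t \<and> t \<le> xs!(Suc i)"
        using Cons.IH Cons.prems False nt by auto
      then obtain i where "i < length xs - 1" "xs!i < t" "t \<le> xs!(Suc i)" by blast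
      then show ?thesis by (auto intro!: exI[of _ "Suc i"])
    qed
  qed
qed

lemma PL_F_basic:
  assumes "f \<in> PL_F r \<Lambda> A"
  shows "\<And>t. t \<notin> {0..<r} \<Longrightarrow> f t = t"
    and "continuous_on {0..<r} f" and "f ` {0..<r} = {0..<r}" and "inj_on f {0..<r}"
proof -
  from assms obtain g where h: "homeomorphism {0..<r} {0..<r} f g" unfolding PL_F_def by blast
  show "\<And>t. t \<notin> {0..<r} \<Longrightarrow> f t = t" using assms unfolding PL_F_def by blast
  show "continuous_on {0..<r} f" "f ` {0..<r} = {0..<r}" using h unfolding homeomorphism_def by auto
  show "inj_on f {0..<r}" using h unfolding homeomorphism_def by (metis inj_on_inverseI)
qed

lemma PL_F_piece_right:
  assumes "f \<in> PL_F r \<Lambda> A" "0 \<le> t" "t < r"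
  shows "\<exists>a b l c. a \<le> t \<and> t < b \<and> b \<le> r \<and> a \<in> A \<and> l \<in> \<Lambda> \<and> (\<forall>s\<in>{a..<b}. f s = l * s + c)"
proof -
  from assms(1) obtain ps :: "real list" where ps: "ps \<noteq> []" "sorted_wrt (<) ps" "hd ps = 0" "last ps = r"
     "set ps \<subseteq> A" and pc: "\<forall>i < length ps - 1. \<exists>l\<in>\<Lambda>. \<exists>c. \<forall>t\<in>{ps!i..<ps!(i+1)}. f t = l * t + c"
    unfolding PL_F_def by blast
  obtain i where i: "i < length ps - 1" "ps!i \<le> t" "t < ps!(Suc i)"
    using sorted_piece_right[OF ps(2,1)] ps assms by auto
  from pc i(1) obtain l c where "l \<in> \<Lambda>" "\<forall>s\<in>{ps!i..<ps!(i+1)}. f s = l * s + c" by meson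
  moreover have "ps!i \<in> A" using ps(5) i(1) by auto
  moreover have "ps!(Suc i) \<le> r"
  proof -
    have "ps!(Suc i) \<le> ps!(length ps - 1)"
      using ps(2) i(1) by (cases "Suc i = length ps - 1") (auto simp: sorted_wrt_iff_nth_less intro: less_imp_le)
    thus ?thesis using ps(1,4) by (simp add: last_conv_nth)
  qed
  ultimately show ?thesis using i by auto
qed

lemma PL_F_piece_left_open:
  assumes "f \<in> PL_F r \<Lambda> A" "0 < t" "t \<le> r"
  shows "\<exists>a l c. a < t \<and> l \<in> \<Lambda> \<and> (\<forall>s\<in>{a..<t}. f s = l * s + c)"
proof -
  from assms(1) obtain ps :: "real list" where ps: "ps \<noteq> []" "sorted_wrt (<) ps" "hd ps = 0" "last ps = r"
     "set ps \<subseteq> A" and pc: "\<forall>i < length ps - 1. \<exists>l\<in>\<Lambda>. \<exists>c. \<forall>t\<in>{ps!i..<ps!(i+1)}. f t = l * t + c"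
    unfolding PL_F_def by blast
  obtain i where i: "i < length ps - 1" "ps!i < t" "t \<le> ps!(Suc i)"
    using sorted_piece_left[OF ps(2,1)] ps assms by auto
  from pc i(1) obtain l c where "l \<in> \<Lambda>" "\<forall>s\<in>{ps!i..<ps!(i+1)}. f s = l * s + c" by meson
  then show ?thesis using i by (intro exI[of _ "ps!i"] exI[of _ l] exI[of _ c]) auto
qed



lemma left_limit_value:
  fixes f :: "real \<Rightarrow> real"
  assumes "continuous_on {0..<r} f" "0 < t" "t < r" "a < t" "\<forall>s\<in>{a..<t}. f s = l * s + c"
  shows "f t = l * t + c"
proof -
  have "continuous_on {0<..<r} f" using assms(1) by (rule continuous_on_subset) auto
  hence "isCont f t" using assms(2,3) by (simp add: continuous_on_eq_continuous_at)
  hence t1: "(f \<longlongrightarrow> f t) (at_left t)" by (simp add: isCont_def filterlim_at_split)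
  have ev: "eventually (\<lambda>s. l * s + c = f s) (at_left t)"
    using eventually_at_left_real[OF assms(4)] assms(5) by (auto elim: eventually_mono)
  have "((\<lambda>s. l * s + c) \<longlongrightarrow> l * t + c) (at_left t)"
    by (intro tendsto_intros)
  hence t2: "(f \<longlongrightarrow> l * t + c) (at_left t)" using tendsto_cong[OF ev] by auto
  show ?thesis using tendsto_unique[OF trivial_limit_at_left_real t1 t2] .
qed

lemma endpoint_value:
  assumes "f \<in> PL_F r \<Lambda> A" "0 \<le> a" "a < r" "l > 0" "\<forall>s\<in>{a..<r}. f s = l * s + c"
  shows "l * r + c = r"
proof -
  note B = PL_F_basic[OF assms(1)]
  have le: "l * r + c \<le> r"
  proof (rule ccontr)
    assume nle: "\<not> l * r + c \<le> r"
    define s where "s = max a (r - (l * r + c - r) / (2 * l))"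
    have "s < r" using assms nle by (auto simp: s_def field_simps)
    have "s \<ge> a" by (simp add: s_def)
    have "l * s \<ge> l * (r - (l * r + c - r) / (2 * l))"
      using assms(4) by (intro mult_left_mono) (auto simp: s_def)
    moreover have "l * (r - (l * r + c - r) / (2 * l)) = l * r - (l * r + c - r) / 2"
      using assms(4) by (simp add: field_simps)
    ultimately have "l * s + c > r - 0" using nle by argo
    moreover have "f s \<in> {0..<r}" using B(3) \<open>s < r\<close> \<open>s \<ge> a\<close> assms(2) by auto
    ultimately show False using assms(5) \<open>s < r\<close> \<open>s \<ge> a\<close> by auto
  qed
  show ?thesis
  proof (rule ccontr)
    assume ne: "\<not> ?thesis"
    hence lt: "l * r + c < r" using le by auto
    have fa: "f a = l * a + c" using assms by auto
    have fa0: "f a \<ge> 0" using B(3) assms(2,3) by auto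
    have "l * a < l * r" using assms by auto
    define w where "w = (l * r + c + r) / 2"
    have w: "w \<in> {0..<r}" using lt fa fa0 \<open>l * a < l * r\<close> by (auto simp: w_def)
    then obtain v where v: "v \<in> {0..<r}" "f v = w" using B(3) by (metis imageE)
    have "v < a"
    proof (rule ccontr)
      assume "\<not> v < a"
      hence "f v = l * v + c" using assms(5) v by auto
      moreover have "l * v < l * r" using v assms(4) by auto
      ultimately show False using v(2) lt by (auto simp: w_def)
    qed
    define w' where "w' = (f a + (l * r + c)) / 2"
    have "continuous_on {v..a} f" using B(2) by (rule continuous_on_subset) (use v assms(3) in auto)
    moreover have "f a \<le> w'" unfolding w'_def using fa \<open>l * a < l * r\<close> lt
      by argo
    moreover have "w' \<le> f v" unfolding w'_def v(2) w_def using fa \<open>l * a < l * r\<close> lt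
      by argo
    ultimately obtain u where u: "v \<le> u" "u \<le> a" "f u = w'"
      using IVT2'[of f a w' v] \<open>v < a\<close> by auto
    have "u \<noteq> a" using u fa \<open>l * a < l * r\<close> by (auto simp: w'_def)
    define s where "s = (w' - c) / l"
    have "s > a" "s < r" using assms(4) fa \<open>l * a < l * r\<close>
      by (auto simp: s_def w'_def field_simps)
    have "f s = w'" using assms(4,5) \<open>s > a\<close> \<open>s < r\<close> by (auto simp: s_def)
    have "u \<in> {0..<r}" "s \<in> {0..<r}" using u v \<open>s > a\<close> \<open>s < r\<close> assms(2) by auto
    hence "u = s" using B(4) \<open>f s = w'\<close> u(3) by (auto dest: inj_onD)
    thus False using \<open>u \<noteq> a\<close> u(2) \<open>s > a\<close> by auto
  qed
qed

lemma PL_F_piece_left: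
  assumes "f \<in> PL_F r \<Lambda> A" "\<Lambda> \<subseteq> {0<..}" "0 < t" "t \<le> r"
  shows "\<exists>a l c. a < t \<and> l \<in> \<Lambda> \<and> (\<forall>s\<in>{a..t}. f s = l * s + c)"
proof -
  obtain a l c where alc: "a < t" "l \<in> \<Lambda>" "\<forall>s\<in>{a..<t}. f s = l * s + c"
    using PL_F_piece_left_open[OF assms(1,3,4)] by blast
  define a' where "a' = max a 0"
  have a': "a' < t" "0 \<le> a'" "\<forall>s\<in>{a'..<t}. f s = l * s + c"
    using alc assms(3) by (auto simp: a'_def)
  have "f t = l * t + c"
  proof (cases "t = r")
    case True
    have "f t = t" using PL_F_basic(1)[OF assms(1)] True by auto
    moreover have "l * r + c = r"
      using endpoint_value[OF assms(1) a'(2)] a' True alc(2) assms(2) by auto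
    ultimately show ?thesis using True by simp
  next
    case False
    thus ?thesis using left_limit_value[OF PL_F_basic(2)[OF assms(1)] assms(3) _ a'(1,3)] assms(4)
      by auto
  qed
  thus ?thesis using a' alc(2) by (intro exI[of _ a'] exI[of _ l] exI[of _ c]) auto
qed



lemma FI_fix: "y \<in> PL_F_on r \<Lambda> A {\<alpha><..<\<beta>} \<Longrightarrow> t \<notin> {\<alpha><..<\<beta>} \<Longrightarrow> y t = t"
  unfolding PL_F_on_def supp_def using PL_F_basic(1)[of y r \<Lambda> A] by blast

lemma FI_PL: "y \<in> PL_F_on r \<Lambda> A S \<Longrightarrow> y \<in> PL_F r \<Lambda> A"
  unfolding PL_F_on_def by blast

lemma two_points:
  fixes l1 l2 c1 c2 p q :: real
  assumes "p \<noteq> q" "l1*p+c1 = l2*p+c2" "l1*q+c1 = l2*q+c2"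
  shows "l1 = l2 \<and> c1 = c2"
proof -
  have "(l1 - l2) * (p - q) = 0" using assms(2,3) by (simp add: algebra_simps)
  hence "l1 = l2" using assms(1) by simp
  thus ?thesis using assms(2) by simp
qed

lemma PL_isCont: "f \<in> PL_F r \<Lambda> A \<Longrightarrow> 0 < t \<Longrightarrow> t < r \<Longrightarrow> isCont f t"
proof -
  assume f: "f \<in> PL_F r \<Lambda> A" and t: "0 < t" "t < r"
  have "continuous_on {0<..<r} f" using PL_F_basic(2)[OF f] by (rule continuous_on_subset) auto
  thus ?thesis using t by (simp add: continuous_on_eq_continuous_at)
qed

lemma comp_eq: "y \<circ> x = x \<circ> y \<Longrightarrow> y (x v) = x (y v)"
  by (metis comp_apply)



lemma inj_right:
  assumes Lam: "\<Lambda> \<subseteq> {0<..}" and a0: "0 \<le> \<alpha>" and ab: "\<alpha> < \<beta>" and br: "\<beta> \<le> r"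
    and x: "x \<in> PL_F_on r \<Lambda> A {\<alpha><..<\<beta>}"
    and xfix: "\<And>t. t \<in> {\<alpha><..<\<beta>} \<Longrightarrow> x t = t \<Longrightarrow> t \<notin> A"
    and y: "y \<in> PL_F_on r \<Lambda> A {\<alpha><..<\<beta>}" and z: "z \<in> PL_F_on r \<Lambda> A {\<alpha><..<\<beta>}"
    and yx: "y \<circ> x = x \<circ> y" and zx: "z \<circ> x = x \<circ> z"
    and sl: "rslope y \<alpha> = rslope z \<alpha>"
  shows "y = z"
proof -
  have xP: "x \<in> PL_F r \<Lambda> A" and yP: "y \<in> PL_F r \<Lambda> A" and zP: "z \<in> PL_F r \<Lambda> A"
    using x y z by (auto intro: FI_PL)
  define E where "E = {s. \<alpha> \<le> s \<and> s \<le> \<beta> \<and> (\<forall>t\<in>{0..s}. y t = z t)}"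
  have aE: "\<alpha> \<in> E" unfolding E_def using ab FI_fix[OF y] FI_fix[OF z] by auto
  have bdd: "bdd_above E" unfolding E_def by (auto intro: bdd_aboveI[of _ \<beta>])
  define S where "S = Sup E"
  have aS: "\<alpha> \<le> S" unfolding S_def using aE bdd by (rule cSup_upper)
  have Sb: "S \<le> \<beta>" unfolding S_def using aE by (intro cSup_least) (auto simp: E_def)
  have below: "y t = z t" if "0 \<le> t" "t < S" for t
  proof -
    have "t < Sup E" using that(2) S_def by simp
    then obtain s where "s \<in> E" "t < s" using less_cSup_iff[of E t] aE bdd by blast
    thus ?thesis using that unfolding E_def by auto
  qed
  have Seqb: "S = \<beta>"
  proof (rule ccontr)
    assume "S \<noteq> \<beta>"
    hence Sb': "S < \<beta>" using Sb by auto
    have Sr: "S < r" using Sb' br by auto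
    have S0: "0 \<le> S" using a0 aS by auto
    have "\<exists>d>S. \<forall>t\<in>{S..<d}. y t = z t"
    proof -
      have xa: "x \<alpha> = \<alpha>" using FI_fix[OF x] by auto
      consider "S = \<alpha>" | "S > \<alpha>" "x S = S" | "x S > S" | "x S < S" using aS by force
      then show ?thesis
      proof cases
        case 1
        obtain a1 b1 l1 c1 where p1: "a1 \<le> \<alpha>" "\<alpha> < b1" "\<forall>s\<in>{a1..<b1}. y s = l1 * s + c1"
          using PL_F_piece_right[OF yP a0] ab br by force
        obtain a2 b2 l2 c2 where p2: "a2 \<le> \<alpha>" "\<alpha> < b2" "\<forall>s\<in>{a2..<b2}. z s = l2 * s + c2"
          using PL_F_piece_right[OF zP a0] ab br by force
        have "rslope y \<alpha> = l1" using p1 by (intro rslope_affine[of _ b1 _ _ c1]) auto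
        moreover have "rslope z \<alpha> = l2" using p2 by (intro rslope_affine[of _ b2 _ _ c2]) auto
        ultimately have l: "l1 = l2" using sl by simp
        have "y \<alpha> = \<alpha>" "z \<alpha> = \<alpha>" using FI_fix[OF y] FI_fix[OF z] by auto
        hence "c1 = c2" using p1 p2 l by force
        thus ?thesis using p1 p2 l 1 by (intro exI[of _ "min b1 b2"]) auto
      next
        case 2
        have SI: "S \<in> {\<alpha><..<\<beta>}" using 2 Sb' by auto
        hence SA: "S \<notin> A" using xfix 2 by auto
        obtain a1 b1 l1 c1 where p1: "a1 \<le> S" "S < b1" "a1 \<in> A" "\<forall>s\<in>{a1..<b1}. y s = l1 * s + c1"
          using PL_F_piece_right[OF yP S0 Sr] by blast
        obtain a2 b2 l2 c2 where p2: "a2 \<le> S" "S < b2" "a2 \<in> A" "\<forall>s\<in>{a2..<b2}. z s = l2 * s + c2"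
          using PL_F_piece_right[OF zP S0 Sr] by blast
        have "a1 < S" "a2 < S" using p1 p2 SA by (auto simp: order.order_iff_strict)
        define a where "a = max (max a1 a2) \<alpha>"
        have a: "a < S" "a1 \<le> a" "a2 \<le> a" "0 \<le> a" using \<open>a1 < S\<close> \<open>a2 < S\<close> 2 a0
          by (auto simp: a_def)
        define p where "p = (a + S) / 2"
        define q where "q = (p + S) / 2"
        have pq: "a \<le> p" "p < S" "a \<le> q" "q < S" "p \<noteq> q" using a by (auto simp: p_def q_def field_simps)
        have "l1 * p + c1 = l2 * p + c2"
          using below[of p] p1(4) p2(4) pq a p1(2) p2(2) by auto
        moreover have "l1 * q + c1 = l2 * q + c2"
          using below[of q] p1(4) p2(4) pq a p1(2) p2(2) by auto
        ultimately have "l1 = l2 \<and> c1 = c2" using two_points pq(5) by blast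
        thus ?thesis using p1 p2 by (intro exI[of _ "min b1 b2"]) auto
      next
        case 3
        have x0: "x 0 = 0" using FI_fix[OF x] a0 by auto
        have cont: "continuous_on {0..S} x"
          using PL_F_basic(2)[OF xP] by (rule continuous_on_subset) (use Sr in auto)
        have "\<forall>t\<in>{S..<min (x S) \<beta>}. y t = z t"
        proof
          fix t assume t: "t \<in> {S..<min (x S) \<beta>}"
          obtain v where v: "0 \<le> v" "v \<le> S" "x v = t"
            using IVT'[of x 0 t S, OF _ _ S0 cont] x0 t S0 by auto
          have "v \<noteq> S" using v t by auto
          hence "y v = z v" using below v by auto
          thus "y t = z t" using comp_eq[OF yx, of v] comp_eq[OF zx, of v] v(3) by simp
        qed
        moreover have "min (x S) \<beta> > S" using 3 Sb' by auto
        ultimately show ?thesis by blast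
      next
        case 4
        have "S \<noteq> \<alpha>" using 4 xa by auto
        hence "0 < S" using aS a0 by auto
        have "isCont x S" using PL_isCont[OF xP \<open>0 < S\<close> Sr] .
        then obtain \<delta> where \<delta>: "\<delta> > 0" "\<And>t. dist t S < \<delta> \<Longrightarrow> dist (x t) (x S) < S - x S"
          unfolding continuous_at_eps_delta using 4 by (metis diff_gt_0_iff_gt)
        have "\<forall>t\<in>{S..<min (S + \<delta>) \<beta>}. y t = z t"
        proof
          fix t assume t: "t \<in> {S..<min (S + \<delta>) \<beta>}"
          have tr: "t \<in> {0..<r}" using t S0 br by auto
          have "dist t S < \<delta>" using t by (auto simp: dist_real_def)
          hence "x t < S" using \<delta>(2)[of t] by (auto simp: dist_real_def)
          moreover have "x t \<ge> 0" using PL_F_basic(3)[OF xP] tr by auto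
          ultimately have "y (x t) = z (x t)" using below by auto
          hence e: "x (y t) = x (z t)" using comp_eq[OF yx, of t] comp_eq[OF zx, of t] by simp
          have "y t \<in> {0..<r}" "z t \<in> {0..<r}"
            using PL_F_basic(3)[OF yP] PL_F_basic(3)[OF zP] tr by auto
          thus "y t = z t" using PL_F_basic(4)[OF xP] e by (auto dest: inj_onD)
        qed
        moreover have "min (S + \<delta>) \<beta> > S" using \<delta> Sb' by auto
        ultimately show ?thesis by blast
      qed
    qed
    then obtain d where d: "d > S" "\<forall>t\<in>{S..<d}. y t = z t" by blast
    define s' where "s' = min ((S + d) / 2) \<beta>"
    have "s' \<in> E" unfolding E_def
    proof (intro CollectI conjI ballI)
      show "\<alpha> \<le> s'" using aS d Sb' by (auto simp: s'_def)
      show "s' \<le> \<beta>" by (simp add: s'_def)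
      fix t assume "t \<in> {0..s'}"
      thus "y t = z t" using below d by (cases "t < S") (auto simp: s'_def)
    qed
    hence "s' \<le> S" unfolding S_def using bdd by (rule cSup_upper)
    moreover have "s' > S" using d Sb' by (auto simp: s'_def)
    ultimately show False by simp
  qed
  show "y = z"
  proof
    fix t
    show "y t = z t"
    proof (cases "0 \<le> t \<and> t < \<beta>")
      case True thus ?thesis using below Seqb by auto
    next
      case False
      hence "t \<notin> {\<alpha><..<\<beta>}" using a0 by auto
      thus ?thesis using FI_fix[OF y] FI_fix[OF z] by metis
    qed
  qed
qed



lemma inj_left:
  assumes Lam: "\<Lambda> \<subseteq> {0<..}" and a0: "0 \<le> \<alpha>" and ab: "\<alpha> < \<beta>" and br: "\<beta> \<le> r"
    and x: "x \<in> PL_F_on r \<Lambda> A {\<alpha><..<\<beta>}"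
    and xfix: "\<And>t. t \<in> {\<alpha><..<\<beta>} \<Longrightarrow> x t = t \<Longrightarrow> t \<notin> A"
    and y: "y \<in> PL_F_on r \<Lambda> A {\<alpha><..<\<beta>}" and z: "z \<in> PL_F_on r \<Lambda> A {\<alpha><..<\<beta>}"
    and yx: "y \<circ> x = x \<circ> y" and zx: "z \<circ> x = x \<circ> z"
    and sl: "lslope y \<beta> = lslope z \<beta>"
  shows "y = z"
proof -
  have xP: "x \<in> PL_F r \<Lambda> A" and yP: "y \<in> PL_F r \<Lambda> A" and zP: "z \<in> PL_F r \<Lambda> A"
    using x y z by (auto intro: FI_PL)
  have r0: "0 < r" using a0 ab br by auto
  define E where "E = {s. \<alpha> \<le> s \<and> s \<le> \<beta> \<and> (\<forall>t\<in>{s..r}. y t = z t)}"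
  have bE: "\<beta> \<in> E" unfolding E_def using ab FI_fix[OF y] FI_fix[OF z] by auto
  have bdd: "bdd_below E" unfolding E_def by (auto intro: bdd_belowI[of _ \<alpha>])
  define S where "S = Inf E"
  have Sb: "S \<le> \<beta>" unfolding S_def using bE bdd by (rule cInf_lower)
  have aS: "\<alpha> \<le> S" unfolding S_def using bE by (intro cInf_greatest) (auto simp: E_def)
  have above: "y t = z t" if "S < t" "t \<le> r" for t
  proof -
    have "Inf E < t" using that(1) S_def by simp
    then obtain s where "s \<in> E" "s < t" using cInf_less_iff[of E t] bE bdd by blast
    thus ?thesis using that unfolding E_def by auto
  qed
  have Seqa: "S = \<alpha>"
  proof (rule ccontr)
    assume "S \<noteq> \<alpha>"
    hence aS': "\<alpha> < S" using aS by auto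
    have S0: "0 < S" using a0 aS' by auto
    have "\<exists>d<S. \<forall>t\<in>{d<..S}. y t = z t"
    proof -
      have xb: "x \<beta> = \<beta>" using FI_fix[OF x] by auto
      consider "S = \<beta>" | "S < \<beta>" "x S = S" | "x S > S" | "x S < S" using Sb by force
      then show ?thesis
      proof cases
        case 1
        have b0: "0 < \<beta>" using a0 ab by auto
        obtain a1 l1 c1 where p1: "a1 < \<beta>" "\<forall>s\<in>{a1..\<beta>}. y s = l1 * s + c1"
          using PL_F_piece_left[OF yP Lam b0 br] by blast
        obtain a2 l2 c2 where p2: "a2 < \<beta>" "\<forall>s\<in>{a2..\<beta>}. z s = l2 * s + c2"
          using PL_F_piece_left[OF zP Lam b0 br] by blast
        have "lslope y \<beta> = l1" using p1 by (intro lslope_affine[of a1 _ _ _ c1]) auto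
        moreover have "lslope z \<beta> = l2" using p2 by (intro lslope_affine[of a2 _ _ _ c2]) auto
        ultimately have l: "l1 = l2" using sl by simp
        have "y \<beta> = \<beta>" "z \<beta> = \<beta>" using FI_fix[OF y] FI_fix[OF z] by auto
        hence "c1 = c2" using p1 p2 l by force
        thus ?thesis using p1 p2 l 1 by (intro exI[of _ "max a1 a2"]) auto
      next
        case 2
        have SI: "S \<in> {\<alpha><..<\<beta>}" using 2 aS' by auto
        hence SA: "S \<notin> A" using xfix 2 by auto
        have Sr: "S < r" using 2 br by auto
        have S0': "0 \<le> S" using S0 by auto
        obtain a1 b1 l1 c1 where p1: "a1 \<le> S" "S < b1" "b1 \<le> r" "a1 \<in> A" "\<forall>s\<in>{a1..<b1}. y s = l1 * s + c1"
          using PL_F_piece_right[OF yP S0' Sr] by blast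
        obtain a2 b2 l2 c2 where p2: "a2 \<le> S" "S < b2" "b2 \<le> r" "a2 \<in> A" "\<forall>s\<in>{a2..<b2}. z s = l2 * s + c2"
          using PL_F_piece_right[OF zP S0' Sr] by blast
        have "a1 < S" "a2 < S" using p1 p2 SA by (auto simp: order.order_iff_strict)
        define b where "b = min b1 b2"
        have b: "S < b" "b \<le> b1" "b \<le> b2" "b \<le> r" using p1 p2 by (auto simp: b_def)
        define p where "p = (b + S) / 2"
        define q where "q = (p + S) / 2"
        have pq: "S < p" "p < b" "S < q" "q < b" "p \<noteq> q" using b by (auto simp: p_def q_def field_simps)
        have "l1 * p + c1 = l2 * p + c2"
          using above[of p] p1(5) p2(5) pq b p1(1) p2(1) by auto
        moreover have "l1 * q + c1 = l2 * q + c2"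
          using above[of q] p1(5) p2(5) pq b p1(1) p2(1) by auto
        ultimately have "l1 = l2 \<and> c1 = c2" using two_points pq(5) by blast
        thus ?thesis using p1 p2 \<open>a1 < S\<close> \<open>a2 < S\<close> by (intro exI[of _ "max a1 a2"]) auto
      next
        case 4
        have "S \<noteq> \<beta>" using 4 xb by auto
        hence Sb': "S < \<beta>" using Sb by auto
        have Sr: "S < r" using Sb' br by auto
        obtain a l c where pl: "a < r" "l \<in> \<Lambda>" "\<forall>s\<in>{a..r}. x s = l * s + c"
          using PL_F_piece_left[OF xP Lam r0] by blast
        have l0: "l > 0" using pl(2) Lam by auto
        have xr: "x r = r" using FI_fix[OF x] br by auto
        hence lr: "l * r + c = r" using pl by auto
        define w where "w = max (max a S) (r - (r - S) / (2 * l))"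
        have w: "S \<le> w" "w < r" "a \<le> w" using pl(1) Sr l0 by (auto simp: w_def)
        have "l * w \<ge> l * (r - (r - S) / (2 * l))" using l0 by (intro mult_left_mono) (auto simp: w_def)
        moreover have "l * (r - (r - S) / (2 * l)) = l * r - (r - S) / 2" using l0 by (simp add: field_simps)
        moreover have "x w = l * w + c" using pl(3) w by auto
        ultimately have xw: "x w > S" using lr Sr by argo
        have cont: "continuous_on {S..w} x"
          using PL_F_basic(2)[OF xP] by (rule continuous_on_subset) (use w S0 in auto)
        have "\<forall>t\<in>{max (x S) \<alpha><..S}. y t = z t"
        proof
          fix t assume t: "t \<in> {max (x S) \<alpha><..S}"
          obtain v where v: "S \<le> v" "v \<le> w" "x v = t"
            using IVT'[of x S t w, OF _ _ w(1) cont] xw t by auto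
          have "v \<noteq> S" using v t by auto
          hence "y v = z v" using above v w by auto
          thus "y t = z t" using comp_eq[OF yx, of v] comp_eq[OF zx, of v] v(3) by simp
        qed
        moreover have "max (x S) \<alpha> < S" using 4 aS' by auto
        ultimately show ?thesis by blast
      next
        case 3
        have "S \<noteq> \<beta>" using 3 xb by auto
        hence Sb': "S < \<beta>" using Sb by auto
        have Sr: "S < r" using Sb' br by auto
        have "isCont x S" using PL_isCont[OF xP S0 Sr] .
        then obtain \<delta> where \<delta>: "\<delta> > 0" "\<And>t. dist t S < \<delta> \<Longrightarrow> dist (x t) (x S) < x S - S"
          unfolding continuous_at_eps_delta using 3 by (metis diff_gt_0_iff_gt)
        have "\<forall>t\<in>{max (S - \<delta>) \<alpha><..S}. y t = z t"
        proof
          fix t assume t: "t \<in> {max (S - \<delta>) \<alpha><..S}"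
          have tr: "t \<in> {0..<r}" using t a0 Sr by auto
          have "dist t S < \<delta>" using t by (auto simp: dist_real_def)
          hence "x t > S" using \<delta>(2)[of t] by (auto simp: dist_real_def)
          moreover have "x t \<in> x ` {0..<r}" using tr by blast
          hence "x t \<le> r" using PL_F_basic(3)[OF xP] by auto
          ultimately have "y (x t) = z (x t)" using above by auto
          hence e: "x (y t) = x (z t)" using comp_eq[OF yx, of t] comp_eq[OF zx, of t] by simp
          have "y t \<in> {0..<r}" "z t \<in> {0..<r}"
            using PL_F_basic(3)[OF yP] PL_F_basic(3)[OF zP] tr by auto
          thus "y t = z t" using PL_F_basic(4)[OF xP] e by (auto dest: inj_onD)
        qed
        moreover have "max (S - \<delta>) \<alpha> < S" using \<delta> aS' by auto
        ultimately show ?thesis by blast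
      qed
    qed
    then obtain d where d: "d < S" "\<forall>t\<in>{d<..S}. y t = z t" by blast
    define s' where "s' = max ((S + d) / 2) \<alpha>"
    have "s' \<in> E" unfolding E_def
    proof (intro CollectI conjI ballI)
      show "\<alpha> \<le> s'" by (simp add: s'_def)
      show "s' \<le> \<beta>" using d Sb aS' by (auto simp: s'_def)
      fix t assume "t \<in> {s'..r}"
      thus "y t = z t" using above d aS' by (cases "S < t") (auto simp: s'_def)
    qed
    hence "S \<le> s'" unfolding S_def using bdd by (rule cInf_lower)
    moreover have "s' < S" using d aS' by (auto simp: s'_def)
    ultimately show False by simp
  qed
  show "y = z"
  proof
    fix t
    show "y t = z t"
    proof (cases "\<alpha> < t \<and> t \<le> r")
      case True thus ?thesis using above Seqa by auto
    next
      case False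
      hence "t \<notin> {\<alpha><..<\<beta>}" using br by auto
      thus ?thesis using FI_fix[OF y] FI_fix[OF z] by metis
    qed
  qed
qed



lemma comp_right_slope:
  fixes y z :: "real \<Rightarrow> real"
  assumes l1: "l1 > 0" and "t < b1" "t < b2" and py: "\<forall>s\<in>{t..<b1}. y s = l1 * s + c1" and yt: "y t = t"
    and pz: "\<forall>s\<in>{t..<b2}. z s = l2 * s + c2"
  shows "rslope (z \<circ> y) t = l1 * l2"
proof -
  have c1: "c1 = t - l1 * t" using py yt assms(2) by force
  define b where "b = min b1 (t + (b2 - t) / l1)"
  have "t < b" using assms l1 by (auto simp: b_def)
  moreover have "\<forall>s\<in>{t..<b}. (z \<circ> y) s = (l1 * l2) * s + (l2 * c1 + c2)"
  proof
    fix s assume s: "s \<in> {t..<b}"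
    have ys: "y s = t + l1 * (s - t)" using py s c1 by (auto simp: b_def algebra_simps)
    have "l1 * (s - t) \<ge> 0" using s l1 by auto
    moreover have "s - t < (b2 - t) / l1" using s by (auto simp: b_def)
    hence "l1 * (s - t) < b2 - t" using l1 by (simp add: field_simps)
    ultimately have "y s \<in> {t..<b2}" using ys by auto
    hence "z (y s) = l2 * y s + c2" using pz by auto
    thus "(z \<circ> y) s = (l1 * l2) * s + (l2 * c1 + c2)" using py s by (auto simp: b_def algebra_simps)
  qed
  ultimately show ?thesis by (rule rslope_affine)
qed

lemma comp_left_slope:
  fixes y z :: "real \<Rightarrow> real"
  assumes l1: "l1 > 0" and "a1 < t" "a2 < t" and py: "\<forall>s\<in>{a1..t}. y s = l1 * s + c1" and yt: "y t = t"
    and pz: "\<forall>s\<in>{a2..t}. z s = l2 * s + c2"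
  shows "lslope (z \<circ> y) t = l1 * l2"
proof -
  have c1: "c1 = t - l1 * t" using py yt assms(2) by force
  define a where "a = max a1 (t - (t - a2) / l1)"
  have "a < t" using assms l1 by (auto simp: a_def)
  moreover have "\<forall>s\<in>{a..t}. (z \<circ> y) s = (l1 * l2) * s + (l2 * c1 + c2)"
  proof
    fix s assume s: "s \<in> {a..t}"
    have ys: "y s = t - l1 * (t - s)" using py s c1 by (auto simp: a_def algebra_simps)
    have "l1 * (t - s) \<ge> 0" using s l1 by auto
    moreover have "t - s \<le> (t - a2) / l1" using s by (auto simp: a_def)
    hence "l1 * (t - s) \<le> t - a2" using l1 by (simp add: field_simps)
    ultimately have "y s \<in> {a2..t}" using ys by auto
    hence "z (y s) = l2 * y s + c2" using pz by auto
    thus "(z \<circ> y) s = (l1 * l2) * s + (l2 * c1 + c2)" using py s by (auto simp: a_def algebra_simps)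
  qed
  ultimately show ?thesis by (rule lslope_affine)
qed

theorem lemma4p1:
  fixes r \<alpha> \<beta> :: real and \<Lambda> A :: "real set" and x :: "real \<Rightarrow> real"
  assumes r_pos: "r > 0"
    and Lam_pos: "\<Lambda> \<subseteq> {0<..}"
    and Lam_one: "1 \<in> \<Lambda>"
    and Lam_mult: "\<And>a b. a \<in> \<Lambda> \<Longrightarrow> b \<in> \<Lambda> \<Longrightarrow> a * b \<in> \<Lambda>"
    and Lam_inv: "\<And>a. a \<in> \<Lambda> \<Longrightarrow> inverse a \<in> \<Lambda>"
    and Lam_nontriv: "\<Lambda> \<noteq> {1}"
    and A_zero: "0 \<in> A"
    and A_add: "\<And>a b. a \<in> A \<Longrightarrow> b \<in> A \<Longrightarrow> a + b \<in> A"
    and A_neg: "\<And>a. a \<in> A \<Longrightarrow> - a \<in> A"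
    and r_A: "r \<in> A"
    and A_Lam: "\<And>l a. l \<in> \<Lambda> \<Longrightarrow> a \<in> A \<Longrightarrow> l * a \<in> A"
    and \<alpha>_mem: "\<alpha> \<in> {0..r} \<inter> A"
    and \<beta>_mem: "\<beta> \<in> {0..r} \<inter> A"
    and \<alpha>\<beta>: "\<alpha> < \<beta>"
    and x_mem: "x \<in> PL_F_on r \<Lambda> A {\<alpha><..<\<beta>}"
    and x_fix: "fixset x \<inter> {\<alpha><..<\<beta>} \<inter> A = {}"
  defines "FI \<equiv> PL_F_on r \<Lambda> A {\<alpha><..<\<beta>}"
    and "C \<equiv> {y \<in> PL_F_on r \<Lambda> A {\<alpha><..<\<beta>}. y \<circ> x = x \<circ> y}"
  shows "(\<forall>y\<in>FI. rslope y \<alpha> \<in> \<Lambda>) \<and>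
         (\<forall>y\<in>FI. \<forall>z\<in>FI. rslope (z \<circ> y) \<alpha> = rslope y \<alpha> * rslope z \<alpha>) \<and>
         inj_on (\<lambda>y. rslope y \<alpha>) C \<and>
         (\<forall>y\<in>FI. lslope y \<beta> \<in> \<Lambda>) \<and>
         (\<forall>y\<in>FI. \<forall>z\<in>FI. lslope (z \<circ> y) \<beta> = lslope y \<beta> * lslope z \<beta>) \<and>
         inj_on (\<lambda>y. lslope y \<beta>) C"
proof -
  have a0: "0 \<le> \<alpha>" and br: "\<beta> \<le> r" using \<alpha>_mem \<beta>_mem by auto
  have ar: "\<alpha> < r" using \<alpha>\<beta> br by auto
  have b0: "0 < \<beta>" using a0 \<alpha>\<beta> by auto
  have xfix: "\<And>t. t \<in> {\<alpha><..<\<beta>} \<Longrightarrow> x t = t \<Longrightarrow> t \<notin> A"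
    using x_fix unfolding fixset_def by blast
  have R: "\<exists>l c b. l \<in> \<Lambda> \<and> \<alpha> < b \<and> (\<forall>s\<in>{\<alpha>..<b}. y s = l * s + c)" if yF: "y \<in> FI" for y
  proof -
    obtain a b l c where "a \<le> \<alpha>" "\<alpha> < b" "l \<in> \<Lambda>" "\<forall>s\<in>{a..<b}. y s = l * s + c"
      using PL_F_piece_right[OF FI_PL[OF yF[unfolded FI_def]] a0 ar] by blast
    thus ?thesis by (intro exI[of _ l] exI[of _ c] exI[of _ b]) auto
  qed
  have L: "\<exists>l c a. l \<in> \<Lambda> \<and> a < \<beta> \<and> (\<forall>s\<in>{a..\<beta>}. y s = l * s + c)" if yF: "y \<in> FI" for y
  proof -
    obtain a l c where "a < \<beta>" "l \<in> \<Lambda>" "\<forall>s\<in>{a..\<beta>}. y s = l * s + c"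
      using PL_F_piece_left[OF FI_PL[OF yF[unfolded FI_def]] Lam_pos b0 br] by blast
    thus ?thesis by blast
  qed
  have fa: "y \<alpha> = \<alpha>" "y \<beta> = \<beta>" if "y \<in> FI" for y
    using FI_fix[OF that[unfolded FI_def]] by auto
  have P1: "\<forall>y\<in>FI. rslope y \<alpha> \<in> \<Lambda>"
  proof
    fix y assume "y \<in> FI"
    then obtain l c b where "l \<in> \<Lambda>" "\<alpha> < b" "\<forall>s\<in>{\<alpha>..<b}. y s = l * s + c" using R by blast
    thus "rslope y \<alpha> \<in> \<Lambda>" using rslope_affine by metis
  qed
  have P2: "\<forall>y\<in>FI. \<forall>z\<in>FI. rslope (z \<circ> y) \<alpha> = rslope y \<alpha> * rslope z \<alpha>"
  proof (intro ballI)
    fix y z assume y: "y \<in> FI" and z: "z \<in> FI"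
    obtain l1 c1 b1 where p1: "l1 \<in> \<Lambda>" "\<alpha> < b1" "\<forall>s\<in>{\<alpha>..<b1}. y s = l1 * s + c1" using R[OF y] by blast
    obtain l2 c2 b2 where p2: "l2 \<in> \<Lambda>" "\<alpha> < b2" "\<forall>s\<in>{\<alpha>..<b2}. z s = l2 * s + c2" using R[OF z] by blast
    have "l1 > 0" using p1 Lam_pos by auto
    have "rslope (z \<circ> y) \<alpha> = l1 * l2"
      by (rule comp_right_slope[OF \<open>l1 > 0\<close> p1(2) p2(2) p1(3) fa(1)[OF y] p2(3)])
    moreover have "rslope y \<alpha> = l1" using rslope_affine[OF p1(2,3)] .
    moreover have "rslope z \<alpha> = l2" using rslope_affine[OF p2(2,3)] .
    ultimately show "rslope (z \<circ> y) \<alpha> = rslope y \<alpha> * rslope z \<alpha>" by simp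
  qed
  have P4: "\<forall>y\<in>FI. lslope y \<beta> \<in> \<Lambda>"
  proof
    fix y assume "y \<in> FI"
    then obtain l c a where "l \<in> \<Lambda>" "a < \<beta>" "\<forall>s\<in>{a..\<beta>}. y s = l * s + c" using L by blast
    thus "lslope y \<beta> \<in> \<Lambda>" using lslope_affine by metis
  qed
  have P5: "\<forall>y\<in>FI. \<forall>z\<in>FI. lslope (z \<circ> y) \<beta> = lslope y \<beta> * lslope z \<beta>"
  proof (intro ballI)
    fix y z assume y: "y \<in> FI" and z: "z \<in> FI"
    obtain l1 c1 a1 where p1: "l1 \<in> \<Lambda>" "a1 < \<beta>" "\<forall>s\<in>{a1..\<beta>}. y s = l1 * s + c1" using L[OF y] by blast
    obtain l2 c2 a2 where p2: "l2 \<in> \<Lambda>" "a2 < \<beta>" "\<forall>s\<in>{a2..\<beta>}. z s = l2 * s + c2" using L[OF z] by blast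
    have "l1 > 0" using p1 Lam_pos by auto
    have "lslope (z \<circ> y) \<beta> = l1 * l2"
      by (rule comp_left_slope[OF \<open>l1 > 0\<close> p1(2) p2(2) p1(3) fa(2)[OF y] p2(3)])
    moreover have "lslope y \<beta> = l1" using lslope_affine[OF p1(2,3)] .
    moreover have "lslope z \<beta> = l2" using lslope_affine[OF p2(2,3)] .
    ultimately show "lslope (z \<circ> y) \<beta> = lslope y \<beta> * lslope z \<beta>" by simp
  qed
  have P3: "inj_on (\<lambda>y. rslope y \<alpha>) C"
  proof (rule inj_onI)
    fix y z assume "y \<in> C" "z \<in> C" "rslope y \<alpha> = rslope z \<alpha>"
    thus "y = z" using inj_right[OF Lam_pos a0 \<alpha>\<beta> br x_mem xfix] unfolding C_def by blast
  qed
  have P6: "inj_on (\<lambda>y. lslope y \<beta>) C"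
  proof (rule inj_onI)
    fix y z assume "y \<in> C" "z \<in> C" "lslope y \<beta> = lslope z \<beta>"
    thus "y = z" using inj_left[OF Lam_pos a0 \<alpha>\<beta> br x_mem xfix] unfolding C_def by blast
  qed
  show ?thesis using P1 P2 P3 P4 P5 P6 by blast
qed


end
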